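(* Let $G$ be a connected metrizable compact Hausdorff topological group acting on itself by left translation. Then $\mathbf{TC}_G(G)=\mathrm{cat}(G)$.
   Context: $\mathrm{cat}(X)$ denotes the (un-normalized) Lusternik–Schnirelmann category: the least $k$ such that $X$ is covered by $k$ open sets each of whose inclusions into $X$ is null-homotopic. Two $G$-maps are $G$-homotopic if there is a $G$-equivariant homotopy between them ($G$ acting trivially on $I=[0,1]$). For a $G$-map $p\colon E\to B$, $\mathrm{secat}_G(p)$ is the least $k$ such that $B$ is covered by $k$ $G$-invariant open sets $U_i$, each admitting a $G$-map $s\colon U_i\to E$ with $ps$ $G$-homotopic to the inclusion $U_i\hookrightarrow B$ ($\infty$ if none). For a $G$-space $X$, $\mathbf{TC}_G(X)=\mathrm{secat}_G(\pi)$ where $\pi\colon X^I\to X\times X$, $\pi(\gamma)=(\gamma(0),\gamma(1))$, $X^I$ has the compact-open topology and action $(g\gamma)(t)=g\gamma(t)$, and $X\times X$ has the diagonal action. *)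

theory Defs
  imports "HOL-Analysis.Analysis" "HOL-Algebra.Group" "HOL-Library.Extended_Nat" "HOL-Library.FuncSet"
begin

text \<open>Un-normalized Lusternik--Schnirelmann category: least k such that the space is
  covered by k open sets whose inclusions are null-homotopic (\<infinity> if none).\<close>
definition LS_cat :: "'a topology \<Rightarrow> enat" where
  "LS_cat X = Inf {enat k | k. \<exists>U :: nat \<Rightarrow> 'a set.
      (\<forall>i<k. openin X (U i) \<and>
         (\<exists>c. homotopic_with (\<lambda>h. True) (subtopology X (U i)) X id (\<lambda>x. c))) \<and>
      (\<Union>i<k. U i) = topspace X}"

definition topological_group :: "('a, 'b) monoid_scheme \<Rightarrow> 'a topology \<Rightarrow> bool" where
  "topological_group G T \<longleftrightarrow> group G \<and> carrier G = topspace T \<and>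
     continuous_map (prod_topology T T) T (\<lambda>(x, y). x \<otimes>\<^bsub>G\<^esub> y) \<and>
     continuous_map T T (\<lambda>x. inv\<^bsub>G\<^esub> x)"

definition compact_open_topology :: "'a topology \<Rightarrow> 'b topology \<Rightarrow> ('a \<Rightarrow> 'b) topology" where
  "compact_open_topology I X = topology_generated_by
     {{f. continuous_map I X f \<and> f \<in> extensional (topspace I) \<and> f ` K \<subseteq> V} | K V.
        compactin I K \<and> openin X V}"

definition path_space :: "'a topology \<Rightarrow> (real \<Rightarrow> 'a) topology" where
  "path_space X = compact_open_topology (top_of_set {0..1}) X"

definition secat_G ::
  "('g, 'm) monoid_scheme \<Rightarrow> 'e topology \<Rightarrow> 'b topology \<Rightarrow>
   ('g \<Rightarrow> 'e \<Rightarrow> 'e) \<Rightarrow> ('g \<Rightarrow> 'b \<Rightarrow> 'b) \<Rightarrow> ('e \<Rightarrow> 'b) \<Rightarrow> enat" where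
  "secat_G G E B aE aB p = Inf {enat k | k. \<exists>U :: nat \<Rightarrow> 'b set.
      (\<forall>i<k. openin B (U i) \<and>
         (\<forall>g\<in>carrier G. \<forall>x\<in>U i. aB g x \<in> U i) \<and>
         (\<exists>s. continuous_map (subtopology B (U i)) E s \<and>
              (\<forall>g\<in>carrier G. \<forall>x\<in>U i. s (aB g x) = aE g (s x)) \<and>
              homotopic_with (\<lambda>h. \<forall>g\<in>carrier G. \<forall>x\<in>U i. h (aB g x) = aB g (h x))
                 (subtopology B (U i)) B (p \<circ> s) id)) \<and>
      (\<Union>i<k. U i) = topspace B}"

definition TC_G ::
  "('g, 'm) monoid_scheme \<Rightarrow> 'a topology \<Rightarrow> ('g \<Rightarrow> 'a \<Rightarrow> 'a) \<Rightarrow> enat" where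
  "TC_G G X a = secat_G G (path_space X) (prod_topology X X)
      (\<lambda>g \<gamma>. restrict (\<lambda>t. a g (\<gamma> t)) {0..1})
      (\<lambda>g (x, y). (a g x, a g y))
      (\<lambda>\<gamma>. (\<gamma> 0, \<gamma> 1))"

end

theory Submission
  imports Defs
begin


lemma topspace_path_space:
  "topspace (path_space X) = {f. continuous_map (top_of_set {0..1}) X f \<and> f \<in> extensional {0..1}}"
  unfolding path_space_def compact_open_topology_def topology_generated_by_topspace
  by auto

lemma exp_cont:
  fixes F :: "'z \<times> real \<Rightarrow> 'a"
  assumes F: "continuous_map (prod_topology Z (top_of_set {0..1})) X F"
  shows "continuous_map Z (path_space X) (\<lambda>z. restrict (\<lambda>t. F (z,t)) {0..1})"
proof -
  have cz: "continuous_map (top_of_set {0..1}) X (restrict (\<lambda>t. F (z,t)) {0..1})"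
    if z: "z \<in> topspace Z" for z
  proof -
    have "continuous_map (top_of_set {0..1}) X (\<lambda>t. F (z,t))"
      by (rule continuous_map_compose[OF _ F, unfolded o_def])
         (simp add: continuous_map_pairedI z)
    then show ?thesis
      by (rule continuous_map_eq) auto
  qed
  show ?thesis
    unfolding path_space_def compact_open_topology_def
  proof (rule continuous_on_generated_topo)
    fix S :: "(real \<Rightarrow> 'a) set" assume "S \<in> {{f. continuous_map (top_of_set {0..1}) X f \<and> f \<in> extensional (topspace (top_of_set {0..1})) \<and> f ` K \<subseteq> V} | K V.
        compactin (top_of_set {0..1}) K \<and> openin X V}"
    then obtain K :: "real set" and V :: "'a set" where S: "S = {f. continuous_map (top_of_set {0..1}) X f \<and> f \<in> extensional (topspace (top_of_set {0..1})) \<and> f ` K \<subseteq> V}"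
      and K: "compactin (top_of_set {0..1}) K" and V: "openin X V" by blast
    have K01: "K \<subseteq> {0..1}" using K compactin_subset_topspace by fastforce
    have eq: "(\<lambda>z. restrict (\<lambda>t. F (z,t)) {0..1}) -` S \<inter> topspace Z = {z \<in> topspace Z. \<forall>t\<in>K. F (z,t) \<in> V}"
    proof -
      have r: "restrict (\<lambda>t. F (z,t)) {0..1} ` K = (\<lambda>t. F (z,t)) ` K" for z
        using K01 by auto
      have K01': "\<And>t. t \<in> K \<Longrightarrow> 0 \<le> t \<and> t \<le> 1" using K01 by auto
      show ?thesis using cz K01' by (auto simp: S r image_subset_iff)
    qed
    have W: "openin (prod_topology Z (top_of_set {0..1})) {p \<in> topspace (prod_topology Z (top_of_set {0..1})). F p \<in> V}"
      by (rule openin_continuous_map_preimage[OF F V])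
    show "openin Z ((\<lambda>z. restrict (\<lambda>t. F (z,t)) {0..1}) -` S \<inter> topspace Z)"
      unfolding eq
    proof (subst openin_subopen, intro ballI)
      fix z assume z: "z \<in> {z \<in> topspace Z. \<forall>t\<in>K. F (z,t) \<in> V}"
      have zt: "z \<in> topspace Z" using z by blast
      have sub: "{z} \<times> K \<subseteq> {p \<in> topspace (prod_topology Z (top_of_set {0..1})). F p \<in> V}"
        using z K01 zt by auto
      have "\<exists>U V'. openin Z U \<and> openin (top_of_set {0..1}) V' \<and> z \<in> U \<and> K \<subseteq> V' \<and> U \<times> V' \<subseteq> {p \<in> topspace (prod_topology Z (top_of_set {0..1})). F p \<in> V}"
        by (rule tube_lemma_right[OF W K zt sub])
      then obtain U' V' where UV: "openin Z U'" "openin (top_of_set {0..1}) V'" "z \<in> U'" "K \<subseteq> V'"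
        "U' \<times> V' \<subseteq> {p \<in> topspace (prod_topology Z (top_of_set {0..1})). F p \<in> V}"
        by blast
      show "\<exists>T. openin Z T \<and> z \<in> T \<and> T \<subseteq> {z \<in> topspace Z. \<forall>t\<in>K. F (z,t) \<in> V}"
      proof (intro exI conjI)
        show "U' \<subseteq> {z \<in> topspace Z. \<forall>t\<in>K. F (z,t) \<in> V}"
        proof
          fix w assume w: "w \<in> U'"
          have "w \<in> topspace Z" using openin_subset[OF UV(1)] w by blast
          moreover have "\<forall>t\<in>K. F (w,t) \<in> V"
          proof
            fix t assume "t \<in> K"
            then have "(w,t) \<in> U' \<times> V'" using w UV(4) by blast
            then show "F (w,t) \<in> V" using UV(5) by blast
          qed
          ultimately show "w \<in> {z \<in> topspace Z. \<forall>t\<in>K. F (z,t) \<in> V}" by blast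
        qed
      qed (use UV in auto)
    qed
  next
    show "(\<lambda>z. restrict (\<lambda>t. F (z,t)) {0..1}) ` topspace Z \<subseteq> \<Union> {{f. continuous_map (top_of_set {0..1}) X f \<and> f \<in> extensional (topspace (top_of_set {0..1})) \<and> f ` K \<subseteq> V} | K V.
        compactin (top_of_set {0..1}) K \<and> openin X V}"
    proof (rule image_subsetI)
      fix z assume z: "z \<in> topspace Z"
      let ?S = "{f. continuous_map (top_of_set {0..1}) X f \<and> f \<in> extensional (topspace (top_of_set {0..1::real})) \<and> f ` {} \<subseteq> topspace X}"
      have "restrict (\<lambda>t. F (z,t)) {0..1} \<in> ?S" using cz[OF z] by simp
      moreover have "?S \<in> {{f. continuous_map (top_of_set {0..1}) X f \<and> f \<in> extensional (topspace (top_of_set {0..1})) \<and> f ` K \<subseteq> V} | K V.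
        compactin (top_of_set {0..1}) K \<and> openin X V}"
        by (rule CollectI, rule exI[of _ "{}"], rule exI[of _ "topspace X"]) simp
      ultimately show "restrict (\<lambda>t. F (z,t)) {0..1} \<in> \<Union> {{f. continuous_map (top_of_set {0..1}) X f \<and> f \<in> extensional (topspace (top_of_set {0..1})) \<and> f ` K \<subseteq> V} | K V.
        compactin (top_of_set {0..1}) K \<and> openin X V}"
        by (rule UnionI[rotated])
    qed
  qed
qed

lemma eval_cont:
  "continuous_map (prod_topology (path_space X) (top_of_set {0..1})) X (\<lambda>(f,t). f t)"
  unfolding continuous_map_def
proof (intro conjI allI impI)
  show "(\<lambda>(f,t). f t) \<in> topspace (prod_topology (path_space X) (top_of_set {0..1})) \<rightarrow> topspace X"
    by (force simp: topspace_path_space continuous_map_def)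
next
  fix V assume V: "openin X V"
  let ?P = "prod_topology (path_space X) (top_of_set {0..1::real})"
  show "openin ?P {x \<in> topspace ?P. (case x of (f,t) \<Rightarrow> f t) \<in> V}"
  proof (subst openin_subopen, intro ballI)
    fix p assume p: "p \<in> {x \<in> topspace ?P. (case x of (f,t) \<Rightarrow> f t) \<in> V}"
    obtain f0 t0 where p0: "p = (f0,t0)" by (cases p)
    have f0: "continuous_map (top_of_set {0..1}) X f0" "f0 \<in> extensional {0..1}"
      and t0: "t0 \<in> {0..1}" and f0t0: "f0 t0 \<in> V"
      using p by (auto simp: p0 topspace_path_space)
    have "openin (top_of_set {0..1}) {t \<in> topspace (top_of_set {0..1::real}). f0 t \<in> V}"
      by (rule openin_continuous_map_preimage[OF f0(1) V])
    then have A: "openin (top_of_set {0..1}) {t \<in> {0..1::real}. f0 t \<in> V}" by simp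
    obtain e where e: "e > 0" "\<And>t. t \<in> {0..1} \<Longrightarrow> dist t t0 < e \<Longrightarrow> f0 t \<in> V"
      using A t0 f0t0 unfolding openin_euclidean_subtopology_iff by blast
    define K where "K = {max 0 (t0 - e/2) .. min 1 (t0 + e/2)}"
    have K01: "K \<subseteq> {0..1}" unfolding K_def by auto
    have Kc: "compactin (top_of_set {0..1}) K"
      unfolding compactin_subtopology using K01 by (simp add: K_def)
    let ?N = "{f. continuous_map (top_of_set {0..1}) X f \<and> f \<in> extensional (topspace (top_of_set {0..1::real})) \<and> f ` K \<subseteq> V}"
    have N: "openin (path_space X) ?N"
      unfolding path_space_def compact_open_topology_def
      by (rule topology_generated_by_Basis) (use Kc V in blast)
    let ?M = "{0..1} \<inter> ball t0 (e/2)"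
    have M: "openin (top_of_set {0..1}) ?M" by blast
    have NM: "openin ?P (?N \<times> ?M)" using N M by (simp add: openin_prod_Times_iff)
    have "f0 ` K \<subseteq> V"
    proof
      fix y assume "y \<in> f0 ` K"
      then obtain t where t: "t \<in> K" "y = f0 t" by blast
      have "t \<in> {0..1}" using t K01 by blast
      moreover have "dist t t0 < e" using t(1) e(1) unfolding K_def by (auto simp: dist_real_def)
      ultimately show "y \<in> V" using e(2) t by blast
    qed
    then have pin: "p \<in> ?N \<times> ?M" using f0 t0 e(1) by (simp add: p0)
    have sub: "?N \<times> ?M \<subseteq> {x \<in> topspace ?P. (case x of (f,t) \<Rightarrow> f t) \<in> V}"
    proof
      fix q assume q: "q \<in> ?N \<times> ?M"
      obtain f t where qq: "q = (f,t)" by (cases q)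
      have fN: "f \<in> ?N" and tM: "t \<in> ?M" using q qq by auto
      have "f \<in> topspace (path_space X)" using openin_subset[OF N] fN by blast
      moreover have "t \<in> K" using tM unfolding K_def by (auto simp: dist_real_def abs_if split: if_splits)
      moreover have "t \<in> {0..1}" using tM by blast
      ultimately show "q \<in> {x \<in> topspace ?P. (case x of (f,t) \<Rightarrow> f t) \<in> V}"
        using fN qq by auto
    qed
    show "\<exists>T. openin ?P T \<and> p \<in> T \<and> T \<subseteq> {x \<in> topspace ?P. (case x of (f,t) \<Rightarrow> f t) \<in> V}"
      using NM pin sub by blast
  qed
qed



lemma B_core:
  fixes G :: "('a, 'b) monoid_scheme" and T :: "'a topology"
  assumes tg: "topological_group G T"
    and U: "openin (prod_topology T T) U"
    and s: "continuous_map (subtopology (prod_topology T T) U) (path_space T) s"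
    and h: "homotopic_with Q (subtopology (prod_topology T T) U) (prod_topology T T) ((\<lambda>\<gamma>. (\<gamma> 0, \<gamma> 1)) \<circ> s) id"
  shows "homotopic_with (\<lambda>h. True) (subtopology T {y \<in> topspace T. (\<one>\<^bsub>G\<^esub>, y) \<in> U}) T id (\<lambda>x. \<one>\<^bsub>G\<^esub>)"
proof -
  have grp: "group G" and carr: "carrier G = topspace T" using tg by (auto simp: topological_group_def)
  have one: "\<one>\<^bsub>G\<^esub> \<in> topspace T" using grp carr group.is_monoid monoid.one_closed by fastforce
  define V where "V = {y \<in> topspace T. (\<one>\<^bsub>G\<^esub>, y) \<in> U}"
  let ?SV = "subtopology T V"
  define j :: "'a \<Rightarrow> 'a \<times> 'a" where "j = (\<lambda>y. (\<one>\<^bsub>G\<^esub>, y))"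
  have jc0: "continuous_map ?SV (prod_topology T T) j"
    unfolding j_def
    by (intro continuous_map_pairedI continuous_map_const[THEN iffD2]) (simp_all add: one)
  have jc: "continuous_map ?SV (subtopology (prod_topology T T) U) j"
    using jc0 by (auto simp: continuous_map_in_subtopology V_def j_def)
  have H1: "homotopic_with (\<lambda>h. True) (subtopology (prod_topology T T) U) (prod_topology T T) ((\<lambda>\<gamma>. (\<gamma> 0, \<gamma> 1)) \<circ> s) id"
    using h by (rule homotopic_with_mono) simp
  have H2: "homotopic_with (\<lambda>h. True) ?SV (prod_topology T T) ((\<lambda>\<gamma>. (\<gamma> 0, \<gamma> 1)) \<circ> s \<circ> j) (id \<circ> j)"
    by (rule homotopic_with_compose_continuous_map_right[OF H1 jc]) simp
  have H3: "homotopic_with (\<lambda>h. True) ?SV T (fst \<circ> ((\<lambda>\<gamma>. (\<gamma> 0, \<gamma> 1)) \<circ> s \<circ> j)) (fst \<circ> (id \<circ> j))"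
    by (rule homotopic_with_compose_continuous_map_left[OF H2 continuous_map_fst]) simp
  have H4: "homotopic_with (\<lambda>h. True) ?SV T (snd \<circ> ((\<lambda>\<gamma>. (\<gamma> 0, \<gamma> 1)) \<circ> s \<circ> j)) (snd \<circ> (id \<circ> j))"
    by (rule homotopic_with_compose_continuous_map_left[OF H2 continuous_map_snd]) simp
  have e1: "fst \<circ> ((\<lambda>\<gamma>. (\<gamma> 0, \<gamma> 1)) \<circ> s \<circ> j) = (\<lambda>y. s (j y) 0)" by (simp add: fun_eq_iff)
  have e2: "snd \<circ> ((\<lambda>\<gamma>. (\<gamma> 0, \<gamma> 1)) \<circ> s \<circ> j) = (\<lambda>y. s (j y) 1)" by (simp add: fun_eq_iff)
  have e3: "fst \<circ> (id \<circ> j) = (\<lambda>x. \<one>\<^bsub>G\<^esub>)" by (simp add: fun_eq_iff j_def)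
  have e4: "snd \<circ> (id \<circ> j) = id" by (simp add: fun_eq_iff j_def)
  have H5: "homotopic_with (\<lambda>h. True) ?SV T (\<lambda>y. s (j y) 0) (\<lambda>y. s (j y) 1)"
    unfolding homotopic_with_def
  proof (intro exI conjI)
    have c1: "continuous_map (prod_topology (top_of_set {0..1}) ?SV) (prod_topology (path_space T) (top_of_set {0..1})) (\<lambda>(t,y). (s (j y), t))"
    proof -
      have "continuous_map (prod_topology (top_of_set {0..1}) ?SV) (path_space T) (s \<circ> j \<circ> snd)"
        by (intro continuous_map_compose[OF continuous_map_snd] continuous_map_compose[OF jc s])
      then show ?thesis
        using continuous_map_pairedI[OF _ continuous_map_fst] unfolding o_def
        by (simp add: case_prod_beta')
    qed
    show "continuous_map (prod_topology (top_of_set {0..1}) ?SV) T (\<lambda>(t,y). s (j y) t)"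
      using continuous_map_compose[OF c1 eval_cont] by (simp add: o_def case_prod_beta')
  qed auto
  have A1: "homotopic_with (\<lambda>h. True) ?SV T id (\<lambda>y. s (j y) 1)"
    using H4 unfolding e2 e4 by (simp add: homotopic_with_sym)
  have A2: "homotopic_with (\<lambda>h. True) ?SV T (\<lambda>y. s (j y) 1) (\<lambda>y. s (j y) 0)"
    using H5 by (simp add: homotopic_with_sym)
  have "homotopic_with (\<lambda>h. True) ?SV T id (\<lambda>y. s (j y) 0)"
    by (rule homotopic_with_trans[OF A1 A2])
  from homotopic_with_trans[OF this H3[unfolded e1 e3]] show ?thesis unfolding V_def[symmetric] .
qed



lemma null_path:
  assumes H: "homotopic_with (\<lambda>h. True) (subtopology T V) T id (\<lambda>x. c)"
    and v: "v \<in> V" "v \<in> topspace T"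
  shows "path_component_of T v c"
proof -
  obtain h where hc: "continuous_map (prod_topology (top_of_set {0..1::real}) (subtopology T V)) T h"
    and h0: "\<And>x. h (0,x) = x" and h1: "\<And>x. h (1,x) = c"
    using H unfolding homotopic_with_def by auto
  have "continuous_map (top_of_set {0..1}) (prod_topology (top_of_set {0..1::real}) (subtopology T V)) (\<lambda>t. (t, v))"
    using v by (intro continuous_map_pairedI) (auto simp: continuous_map_const)
  then have "pathin T (\<lambda>t. h (t, v))"
    unfolding pathin_def using continuous_map_compose[OF _ hc] by (simp add: o_def)
  then show ?thesis unfolding path_component_of_def using h0 h1 by blast
qed

lemma pc_all:
  assumes conn: "connected_space T"
    and VH: "\<And>i. i < k \<Longrightarrow> openin T (V i) \<and> homotopic_with (\<lambda>h. True) (subtopology T (V i)) T id (\<lambda>x. c i)"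
    and cov: "(\<Union>i<k. V i) = topspace T"
    and x: "x \<in> topspace T" and y: "y \<in> topspace T"
  shows "path_component_of T x y"
proof -
  have loc: "\<exists>N. openin T N \<and> w \<in> N \<and> N \<subseteq> Collect (path_component_of T w)" if w: "w \<in> topspace T" for w
  proof -
    obtain i where i: "i < k" "w \<in> V i" using w cov by blast
    have Vt: "V i \<subseteq> topspace T" using VH[OF i(1)] openin_subset by blast
    have wc: "path_component_of T w (c i)" using null_path[of T "V i" "c i" w] VH[OF i(1)] i Vt by blast
    have "V i \<subseteq> Collect (path_component_of T w)"
    proof
      fix v assume v: "v \<in> V i"
      have "path_component_of T v (c i)" using null_path[of T "V i" "c i" v] VH[OF i(1)] v Vt by blast
      then show "v \<in> Collect (path_component_of T w)"
        using wc by (metis mem_Collect_eq path_component_of_sym path_component_of_trans)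
    qed
    then show ?thesis using VH[OF i(1)] i by blast
  qed
  let ?P = "Collect (path_component_of T x)"
  have op: "openin T ?P"
  proof (subst openin_subopen, intro ballI)
    fix w assume w: "w \<in> ?P"
    then have wt: "w \<in> topspace T" and eq: "path_component_of T w = path_component_of T x"
      using path_component_of_equiv by (metis mem_Collect_eq)+
    show "\<exists>N. openin T N \<and> w \<in> N \<and> N \<subseteq> ?P" using loc[OF wt] eq by metis
  qed
  have cl: "openin T (topspace T - ?P)"
  proof (subst openin_subopen, intro ballI)
    fix w assume w: "w \<in> topspace T - ?P"
    obtain N where N: "openin T N" "w \<in> N" "N \<subseteq> Collect (path_component_of T w)" using loc w by blast
    have "N \<subseteq> topspace T - ?P"
    proof
      fix n assume "n \<in> N"
      then have "path_component_of T w n" using N by blast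
      moreover have "\<not> path_component_of T x w" using w by blast
      ultimately show "n \<in> topspace T - ?P"
        using path_component_of_subset_topspace[of T w] \<open>n \<in> N\<close> N
        by (metis DiffI mem_Collect_eq path_component_of_sym path_component_of_trans subsetD)
    qed
    then show "\<exists>N. openin T N \<and> w \<in> N \<and> N \<subseteq> topspace T - ?P" using N by blast
  qed
  have "closedin T ?P" using cl path_component_of_subset_topspace[of T x]
    by (simp add: closedin_def double_diff)
  then have "?P = {} \<or> ?P = topspace T" using conn op unfolding connected_space_clopen_in by blast
  moreover have "x \<in> ?P" using x path_component_of_refl by fastforce
  ultimately show ?thesis using y by auto
qed



lemma (in group) cancel1:
  "\<lbrakk>g \<in> carrier G; x \<in> carrier G; y \<in> carrier G\<rbrakk> \<Longrightarrow> inv (g \<otimes> x) \<otimes> (g \<otimes> y) = inv x \<otimes> y"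
  by (simp add: inv_mult_group m_assoc[symmetric]) (simp add: m_assoc)

lemma (in group) cancel2:
  "\<lbrakk>x \<in> carrier G; y \<in> carrier G\<rbrakk> \<Longrightarrow> x \<otimes> (inv x \<otimes> y) = y"
  by (simp add: m_assoc[symmetric])

lemma A_core:
  fixes G :: "('a, 'b) monoid_scheme" and T :: "'a topology"
  assumes tg: "topological_group G T"
    and V: "openin T V"
    and H: "homotopic_with (\<lambda>h. True) (subtopology T V) T id (\<lambda>x. c)"
    and om: "pathin T \<omega>" and om0: "V \<noteq> {} \<Longrightarrow> \<omega> 0 = c" and om1: "\<omega> 1 = \<one>\<^bsub>G\<^esub>"
    and Udef: "U = {z \<in> topspace T \<times> topspace T. inv\<^bsub>G\<^esub> (fst z) \<otimes>\<^bsub>G\<^esub> snd z \<in> V}"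
  shows "openin (prod_topology T T) U"
    "\<And>g x y. g \<in> carrier G \<Longrightarrow> (x,y) \<in> U \<Longrightarrow> (g \<otimes>\<^bsub>G\<^esub> x, g \<otimes>\<^bsub>G\<^esub> y) \<in> U"
    "\<exists>s. continuous_map (subtopology (prod_topology T T) U) (path_space T) s \<and>
       (\<forall>g\<in>carrier G. \<forall>x y. (x,y) \<in> U \<longrightarrow> s (g \<otimes>\<^bsub>G\<^esub> x, g \<otimes>\<^bsub>G\<^esub> y) = restrict (\<lambda>t. g \<otimes>\<^bsub>G\<^esub> s (x,y) t) {0..1}) \<and>
       homotopic_with (\<lambda>h. \<forall>g\<in>carrier G. \<forall>x y. (x,y) \<in> U \<longrightarrow> h (g \<otimes>\<^bsub>G\<^esub> x, g \<otimes>\<^bsub>G\<^esub> y) = (g \<otimes>\<^bsub>G\<^esub> fst (h (x,y)), g \<otimes>\<^bsub>G\<^esub> snd (h (x,y))))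
          (subtopology (prod_topology T T) U) (prod_topology T T) ((\<lambda>\<gamma>. (\<gamma> 0, \<gamma> 1)) \<circ> s) id"
proof -
  have grp: "group G" and carr: "carrier G = topspace T"
    and mc: "continuous_map (prod_topology T T) T (\<lambda>(x, y). x \<otimes>\<^bsub>G\<^esub> y)"
    and ic: "continuous_map T T (\<lambda>x. inv\<^bsub>G\<^esub> x)"
    using tg by (auto simp: topological_group_def)
  interpret group G by (rule grp)
  obtain h where hc: "continuous_map (prod_topology (top_of_set {0..1::real}) (subtopology T V)) T h"
    and h0: "\<And>x. h (0,x) = x" and h1: "\<And>x. h (1,x) = c"
    using H unfolding homotopic_with_def by auto
  have Vt: "V \<subseteq> topspace T" using V openin_subset by blast
  have hin: "h (t, v) \<in> carrier G" if "t \<in> {0..1}" "v \<in> V" for t v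
  proof -
    have "(t,v) \<in> {0..1} \<times> (topspace T \<inter> V)" using that Vt by auto
    then show ?thesis using continuous_map_image_subset_topspace[OF hc] carr by auto
  qed
  define \<phi> where "\<phi> = (\<lambda>z. inv\<^bsub>G\<^esub> (fst z) \<otimes>\<^bsub>G\<^esub> snd z)"
  have phic: "continuous_map (prod_topology T T) T \<phi>"
  proof -
    have "continuous_map (prod_topology T T) (prod_topology T T) (\<lambda>z. (inv\<^bsub>G\<^esub> (fst z), snd z))"
      by (intro continuous_map_pairedI continuous_map_compose[OF continuous_map_fst ic, unfolded o_def] continuous_map_snd)
    from continuous_map_compose[OF this mc] show ?thesis by (simp add: \<phi>_def o_def)
  qed
  have Ueq: "U = {z \<in> topspace (prod_topology T T). \<phi> z \<in> V}"
    by (simp add: Udef \<phi>_def)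
  show Uo: "openin (prod_topology T T) U"
    unfolding Ueq by (rule openin_continuous_map_preimage[OF phic V])
  have Ut: "\<And>x y. (x,y) \<in> U \<Longrightarrow> x \<in> carrier G \<and> y \<in> carrier G \<and> inv\<^bsub>G\<^esub> x \<otimes>\<^bsub>G\<^esub> y \<in> V"
    by (auto simp: Udef carr)
  show invU: "(g \<otimes>\<^bsub>G\<^esub> x, g \<otimes>\<^bsub>G\<^esub> y) \<in> U" if g: "g \<in> carrier G" and xy: "(x,y) \<in> U" for g x y
  proof -
    have x: "x \<in> carrier G" and y: "y \<in> carrier G" and v: "inv\<^bsub>G\<^esub> x \<otimes>\<^bsub>G\<^esub> y \<in> V" using Ut[OF xy] by auto
    have "g \<otimes>\<^bsub>G\<^esub> x \<in> carrier G" "g \<otimes>\<^bsub>G\<^esub> y \<in> carrier G" using g x y by auto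
    then show ?thesis using v g x y by (simp add: Udef carr[symmetric] cancel1)
  qed
  define s where "s = (\<lambda>z. restrict (\<lambda>t. fst z \<otimes>\<^bsub>G\<^esub> h (1 - t, \<phi> z)) {0..1::real})"
  let ?SU = "subtopology (prod_topology T T) U"
  have sc: "continuous_map ?SU (path_space T) s"
    unfolding s_def
  proof (rule exp_cont[where F = "\<lambda>(z,t). fst z \<otimes>\<^bsub>G\<^esub> h (1 - t, \<phi> z)", simplified])
    have c1: "continuous_map (prod_topology ?SU (top_of_set {0..1})) (top_of_set {0..1::real}) (\<lambda>(z,t). 1 - t)"
    proof -
      have "continuous_map (top_of_set {0..1::real}) (top_of_set {0..1::real}) (\<lambda>t. 1 - t)"
        by (auto intro!: continuous_intros)
      from continuous_map_compose[OF continuous_map_snd this] show ?thesis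
        by (simp add: o_def case_prod_beta')
    qed
    have c2: "continuous_map (prod_topology ?SU (top_of_set {0..1::real})) (subtopology T V) (\<lambda>(z,t). \<phi> z)"
    proof -
      have "continuous_map ?SU (subtopology T V) \<phi>"
        unfolding continuous_map_in_subtopology
        using continuous_map_from_subtopology[OF phic] by (auto simp: Ueq)
      from continuous_map_compose[OF continuous_map_fst this] show ?thesis
        by (simp add: o_def case_prod_beta')
    qed
    have c3: "continuous_map (prod_topology ?SU (top_of_set {0..1::real})) T (\<lambda>(z,t). h (1 - t, \<phi> z))"
      using continuous_map_compose[OF continuous_map_pairedI[OF c1 c2] hc]
      by (simp add: o_def case_prod_beta')
    have c4: "continuous_map (prod_topology ?SU (top_of_set {0..1::real})) T (\<lambda>(z,t). fst z)"
      using continuous_map_compose[OF continuous_map_fst continuous_map_from_subtopology[OF continuous_map_fst]]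
      by (simp add: o_def case_prod_beta')
    show "continuous_map (prod_topology ?SU (top_of_set {0..1::real})) T (\<lambda>(z,t). fst z \<otimes>\<^bsub>G\<^esub> h (1 - t, \<phi> z))"
      using continuous_map_compose[OF continuous_map_pairedI[OF c4 c3] mc]
      by (simp add: o_def case_prod_beta')
  qed
  have seq: "s (g \<otimes>\<^bsub>G\<^esub> x, g \<otimes>\<^bsub>G\<^esub> y) = restrict (\<lambda>t. g \<otimes>\<^bsub>G\<^esub> s (x,y) t) {0..1}"
    if g: "g \<in> carrier G" and xy: "(x,y) \<in> U" for g x y
  proof -
    have "\<phi> (g \<otimes>\<^bsub>G\<^esub> x, g \<otimes>\<^bsub>G\<^esub> y) = \<phi> (x,y)" using Ut[OF xy] g by (simp add: \<phi>_def cancel1)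
    moreover have "(g \<otimes>\<^bsub>G\<^esub> x) \<otimes>\<^bsub>G\<^esub> h (1 - t, \<phi> (x,y)) = g \<otimes>\<^bsub>G\<^esub> (x \<otimes>\<^bsub>G\<^esub> h (1 - t, \<phi> (x,y)))" if "t \<in> {0..1}" for t
      using Ut[OF xy] g hin[of "1 - t" "\<phi> (x,y)"] that by (simp add: \<phi>_def m_assoc)
    ultimately show ?thesis by (auto simp: s_def)
  qed
  let ?Q = "(\<lambda>h. \<forall>g\<in>carrier G. \<forall>x y. (x,y) \<in> U \<longrightarrow> h (g \<otimes>\<^bsub>G\<^esub> x, g \<otimes>\<^bsub>G\<^esub> y) = (g \<otimes>\<^bsub>G\<^esub> fst (h (x,y)), g \<otimes>\<^bsub>G\<^esub> snd (h (x,y))))"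
  have omc: "continuous_map (top_of_set {0..1}) T \<omega>" using om by (simp add: pathin_def)
  have omin: "\<omega> t \<in> carrier G" if "t \<in> {0..1}" for t
    using continuous_map_image_subset_topspace[OF omc] that carr by auto
  define K where "K = (\<lambda>(\<tau>::real, z::'a\<times>'a). (fst z \<otimes>\<^bsub>G\<^esub> \<omega> \<tau>, snd z))"
  define hh where "hh = (\<lambda>(\<tau>::real, z::'a\<times>'a). if \<tau> = 0 then ((\<lambda>\<gamma>. (\<gamma> 0, \<gamma> 1)) \<circ> s) z else if \<tau> = 1 then id z else K (\<tau>,z))"
  have Kc: "continuous_map (prod_topology (top_of_set {0..1}) ?SU) (prod_topology T T) K"
  proof -
    have a: "continuous_map (prod_topology (top_of_set {0..1}) ?SU) T (\<lambda>p. fst (snd p))"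
      using continuous_map_compose[OF continuous_map_snd continuous_map_from_subtopology[OF continuous_map_fst]]
      by (simp add: o_def)
    have b: "continuous_map (prod_topology (top_of_set {0..1}) ?SU) T (\<lambda>p. snd (snd p))"
      using continuous_map_compose[OF continuous_map_snd continuous_map_from_subtopology[OF continuous_map_snd]]
      by (simp add: o_def)
    have c: "continuous_map (prod_topology (top_of_set {0..1}) ?SU) T (\<lambda>p. \<omega> (fst p))"
      using continuous_map_compose[OF continuous_map_fst omc] by (simp add: o_def)
    have d: "continuous_map (prod_topology (top_of_set {0..1}) ?SU) T (\<lambda>p. fst (snd p) \<otimes>\<^bsub>G\<^esub> \<omega> (fst p))"
      using continuous_map_compose[OF continuous_map_pairedI[OF a c] mc] by (simp add: o_def)
    show ?thesis using continuous_map_pairedI[OF d b] by (simp add: K_def case_prod_beta')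
  qed
  have hh_eq: "hh p = K p" if p: "p \<in> topspace (prod_topology (top_of_set {0..1}) ?SU)" for p
  proof -
    obtain \<tau> x y where pp: "p = (\<tau>, (x,y))" by (metis prod.exhaust)
    have xy: "(x,y) \<in> U" and tau: "\<tau> \<in> {0..1}" using p pp by auto
    have x: "x \<in> carrier G" and y: "y \<in> carrier G" and v: "\<phi> (x,y) \<in> V"
      using Ut[OF xy] by (auto simp: \<phi>_def)
    have Vne: "V \<noteq> {}" using v by blast
    show ?thesis
      using x y v om0[OF Vne] om1 h0 h1
      by (auto simp: pp hh_def K_def s_def \<phi>_def cancel2)
  qed
  have hhc: "continuous_map (prod_topology (top_of_set {0..1}) ?SU) (prod_topology T T) hh"
    using continuous_map_eq[OF Kc] hh_eq by metis
  have hhQ: "?Q (\<lambda>z. hh (t, z))" if t: "t \<in> {0..1}" for t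
  proof (intro ballI allI impI)
    fix g x y assume g: "g \<in> carrier G" and xy: "(x,y) \<in> U"
    have x: "x \<in> carrier G" and y: "y \<in> carrier G" using Ut[OF xy] by auto
    show "hh (t, g \<otimes>\<^bsub>G\<^esub> x, g \<otimes>\<^bsub>G\<^esub> y) = (g \<otimes>\<^bsub>G\<^esub> fst (hh (t, x, y)), g \<otimes>\<^bsub>G\<^esub> snd (hh (t, x, y)))"
      using seq[OF g xy] x y g omin[OF t] by (auto simp: hh_def K_def m_assoc)
  qed
  show "\<exists>s. continuous_map ?SU (path_space T) s \<and>
       (\<forall>g\<in>carrier G. \<forall>x y. (x,y) \<in> U \<longrightarrow> s (g \<otimes>\<^bsub>G\<^esub> x, g \<otimes>\<^bsub>G\<^esub> y) = restrict (\<lambda>t. g \<otimes>\<^bsub>G\<^esub> s (x,y) t) {0..1}) \<and>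
       homotopic_with ?Q ?SU (prod_topology T T) ((\<lambda>\<gamma>. (\<gamma> 0, \<gamma> 1)) \<circ> s) id"
  proof (intro exI conjI ballI allI impI)
    show "continuous_map ?SU (path_space T) s" by (rule sc)
    show "s (g \<otimes>\<^bsub>G\<^esub> x, g \<otimes>\<^bsub>G\<^esub> y) = restrict (\<lambda>t. g \<otimes>\<^bsub>G\<^esub> s (x,y) t) {0..1}" if "g \<in> carrier G" "(x,y) \<in> U" for g x y
      using seq that by blast
    show "homotopic_with ?Q ?SU (prod_topology T T) ((\<lambda>\<gamma>. (\<gamma> 0, \<gamma> 1)) \<circ> s) id"
      unfolding homotopic_with_def
      by (rule exI[of _ hh]) (use hhc hhQ in \<open>auto simp: hh_def\<close>)
  qed
qed



lemma dirB:
  fixes G :: "('a, 'b) monoid_scheme" and T :: "'a topology"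
  assumes tg: "topological_group G T"
    and H: "(\<forall>i<k. openin (prod_topology T T) (U i) \<and>
                    (\<forall>g\<in>carrier G.
                        \<forall>x\<in>U i.
                           (case x of (x, y) \<Rightarrow> (g \<otimes>\<^bsub>G\<^esub> x, g \<otimes>\<^bsub>G\<^esub> y)) \<in> U i) \<and>
                    (\<exists>s. continuous_map
                          (subtopology (prod_topology T T) (U i))
                          (path_space T) s \<and>
                         (\<forall>g\<in>carrier G.
                             \<forall>x\<in>U i.
                                s (case x of (x, y) \<Rightarrow> (g \<otimes>\<^bsub>G\<^esub> x, g \<otimes>\<^bsub>G\<^esub> y)) =
                                (\<lambda>t\<in>{0..1}. g \<otimes>\<^bsub>G\<^esub> s x t)) \<and>
                         homotopic_with
                          (\<lambda>h. \<forall>g\<in>carrier G.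
                                  \<forall>x\<in>U i.
                                     h (case x of (x, y) \<Rightarrow> (g \<otimes>\<^bsub>G\<^esub> x, g \<otimes>\<^bsub>G\<^esub> y)) =
                                     (case h x of (x, y) \<Rightarrow> (g \<otimes>\<^bsub>G\<^esub> x, g \<otimes>\<^bsub>G\<^esub> y)))
                          (subtopology (prod_topology T T) (U i))
                          (prod_topology T T) ((\<lambda>\<gamma>. (\<gamma> 0, \<gamma> 1)) \<circ> s) id)) \<and>
             \<Union> (U ` {..<k}) = topspace (prod_topology T T)"
  shows "\<exists>V. (\<forall>i<k. openin T (V i) \<and>
                    (\<exists>c. homotopic_with (\<lambda>h. True) (subtopology T (V i)) T
                          id (\<lambda>x. c))) \<and>
             \<Union> (V ` {..<k}) = topspace T"
proof -
  have grp: "group G" and carr: "carrier G = topspace T" using tg by (auto simp: topological_group_def)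
  have one: "\<one>\<^bsub>G\<^esub> \<in> topspace T" using grp carr group.is_monoid monoid.one_closed by fastforce
  define V where "V = (\<lambda>i. {y \<in> topspace T. (\<one>\<^bsub>G\<^esub>, y) \<in> U i})"
  have jc0: "continuous_map T (prod_topology T T) (\<lambda>y. (\<one>\<^bsub>G\<^esub>, y))"
    by (intro continuous_map_pairedI continuous_map_const[THEN iffD2]) (simp_all add: one)
  show ?thesis
  proof (intro exI conjI allI impI)
    fix i assume i: "i < k"
    have Uo: "openin (prod_topology T T) (U i)" using H i by blast
    show "openin T (V i)" unfolding V_def by (rule openin_continuous_map_preimage[OF jc0 Uo])
    obtain s where s: "continuous_map (subtopology (prod_topology T T) (U i)) (path_space T) s"
      and hs: "homotopic_with
                          (\<lambda>h. \<forall>g\<in>carrier G.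
                                  \<forall>x\<in>U i.
                                     h (case x of (x, y) \<Rightarrow> (g \<otimes>\<^bsub>G\<^esub> x, g \<otimes>\<^bsub>G\<^esub> y)) =
                                     (case h x of (x, y) \<Rightarrow> (g \<otimes>\<^bsub>G\<^esub> x, g \<otimes>\<^bsub>G\<^esub> y)))
                          (subtopology (prod_topology T T) (U i))
                          (prod_topology T T) ((\<lambda>\<gamma>. (\<gamma> 0, \<gamma> 1)) \<circ> s) id"
      using H i by blast
    show "homotopic_with (\<lambda>h. True) (subtopology T (V i)) T id (\<lambda>x. \<one>\<^bsub>G\<^esub>)"
      unfolding V_def by (rule B_core[OF tg Uo s hs])
  next
    show "\<Union> (V ` {..<k}) = topspace T"
    proof
      show "\<Union> (V ` {..<k}) \<subseteq> topspace T" by (auto simp: V_def)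
      show "topspace T \<subseteq> \<Union> (V ` {..<k})"
      proof
        fix y assume y: "y \<in> topspace T"
        then have "(\<one>\<^bsub>G\<^esub>, y) \<in> topspace (prod_topology T T)" using one by simp
        then obtain i where "i < k" "(\<one>\<^bsub>G\<^esub>, y) \<in> U i" using H by blast
        then show "y \<in> \<Union> (V ` {..<k})" using y by (auto simp: V_def)
      qed
    qed
  qed
qed



lemma dirA:
  fixes G :: "('a, 'b) monoid_scheme" and T :: "'a topology"
  assumes tg: "topological_group G T" and conn: "connected_space T"
    and H: "(\<forall>i<k. openin T (V i) \<and>
                    (\<exists>c. homotopic_with (\<lambda>h. True) (subtopology T (V i)) T
                          id (\<lambda>x. c))) \<and>
             \<Union> (V ` {..<k}) = topspace T"
  shows "\<exists>U. (\<forall>i<k. openin (prod_topology T T) (U i) \<and>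
                    (\<forall>g\<in>carrier G.
                        \<forall>x\<in>U i.
                           (case x of (x, y) \<Rightarrow> (g \<otimes>\<^bsub>G\<^esub> x, g \<otimes>\<^bsub>G\<^esub> y)) \<in> U i) \<and>
                    (\<exists>s. continuous_map
                          (subtopology (prod_topology T T) (U i))
                          (path_space T) s \<and>
                         (\<forall>g\<in>carrier G.
                             \<forall>x\<in>U i.
                                s (case x of (x, y) \<Rightarrow> (g \<otimes>\<^bsub>G\<^esub> x, g \<otimes>\<^bsub>G\<^esub> y)) =
                                (\<lambda>t\<in>{0..1}. g \<otimes>\<^bsub>G\<^esub> s x t)) \<and>
                         homotopic_with
                          (\<lambda>h. \<forall>g\<in>carrier G.
                                  \<forall>x\<in>U i.
                                     h (case x of (x, y) \<Rightarrow> (g \<otimes>\<^bsub>G\<^esub> x, g \<otimes>\<^bsub>G\<^esub> y)) =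
                                     (case h x of (x, y) \<Rightarrow> (g \<otimes>\<^bsub>G\<^esub> x, g \<otimes>\<^bsub>G\<^esub> y)))
                          (subtopology (prod_topology T T) (U i))
                          (prod_topology T T) ((\<lambda>\<gamma>. (\<gamma> 0, \<gamma> 1)) \<circ> s) id)) \<and>
             \<Union> (U ` {..<k}) = topspace (prod_topology T T)"
proof -
  have grp: "group G" and carr: "carrier G = topspace T" using tg by (auto simp: topological_group_def)
  interpret group G by (rule grp)
  have one: "\<one>\<^bsub>G\<^esub> \<in> topspace T" using carr by auto
  have "\<forall>i. \<exists>c. i < k \<longrightarrow> homotopic_with (\<lambda>h. True) (subtopology T (V i)) T id (\<lambda>x. c)"
    using H by blast
  then obtain c where c: "\<And>i. i < k \<Longrightarrow> homotopic_with (\<lambda>h. True) (subtopology T (V i)) T id (\<lambda>x. c i)"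
    by metis
  have VH: "\<And>i. i < k \<Longrightarrow> openin T (V i) \<and> homotopic_with (\<lambda>h. True) (subtopology T (V i)) T id (\<lambda>x. c i)"
    using H c by blast
  have cov: "(\<Union>i<k. V i) = topspace T" using H by blast
  have "\<forall>i. \<exists>\<omega>. i < k \<longrightarrow> pathin T \<omega> \<and> (V i \<noteq> {} \<longrightarrow> \<omega> 0 = c i) \<and> \<omega> 1 = \<one>\<^bsub>G\<^esub>"
  proof (intro allI)
    fix i
    show "\<exists>\<omega>. i < k \<longrightarrow> pathin T \<omega> \<and> (V i \<noteq> {} \<longrightarrow> \<omega> 0 = c i) \<and> \<omega> 1 = \<one>\<^bsub>G\<^esub>"
    proof (cases "i < k \<and> V i \<noteq> {}")
      case True
      then obtain v where v: "v \<in> V i" by blast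
      have Vt: "V i \<subseteq> topspace T" using VH True openin_subset by blast
      have "path_component_of T v (c i)" using null_path[of T "V i" "c i" v] VH True v Vt by blast
      moreover have "path_component_of T v \<one>\<^bsub>G\<^esub>"
        using pc_all[OF conn VH cov, of v "\<one>\<^bsub>G\<^esub>"] v Vt one by blast
      ultimately have "path_component_of T (c i) \<one>\<^bsub>G\<^esub>"
        by (meson path_component_of_sym path_component_of_trans)
      then show ?thesis unfolding path_component_of_def by blast
    next
      case False
      then show ?thesis
        by (intro exI[of _ "\<lambda>t. \<one>\<^bsub>G\<^esub>"]) (auto simp: pathin_const one)
    qed
  qed
  then obtain \<omega> where om: "\<And>i. i < k \<Longrightarrow> pathin T (\<omega> i) \<and> (V i \<noteq> {} \<longrightarrow> \<omega> i 0 = c i) \<and> \<omega> i 1 = \<one>\<^bsub>G\<^esub>"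
    by metis
  define U where "U = (\<lambda>i. {z \<in> topspace T \<times> topspace T. inv\<^bsub>G\<^esub> (fst z) \<otimes>\<^bsub>G\<^esub> snd z \<in> V i})"
  show ?thesis
  proof (rule exI[of _ U], intro conjI allI impI)
    fix i assume i: "i < k"
    have omi: "pathin T (\<omega> i)" "V i \<noteq> {} \<Longrightarrow> \<omega> i 0 = c i" "\<omega> i 1 = \<one>\<^bsub>G\<^esub>" using om[OF i] by auto
    show "openin (prod_topology T T) (U i)"
      using A_core(1)[OF tg conjunct1[OF VH[OF i]] conjunct2[OF VH[OF i]] omi] by (simp add: U_def)
    show "\<forall>g\<in>carrier G. \<forall>x\<in>U i. (case x of (x, y) \<Rightarrow> (g \<otimes>\<^bsub>G\<^esub> x, g \<otimes>\<^bsub>G\<^esub> y)) \<in> U i"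
      using A_core(2)[OF tg conjunct1[OF VH[OF i]] conjunct2[OF VH[OF i]] omi U_def[THEN fun_cong[of _ _ i]]]
      by auto
    obtain s where s1: "continuous_map (subtopology (prod_topology T T) (U i)) (path_space T) s"
      and s2: "\<forall>g\<in>carrier G. \<forall>x y. (x,y) \<in> U i \<longrightarrow> s (g \<otimes>\<^bsub>G\<^esub> x, g \<otimes>\<^bsub>G\<^esub> y) = restrict (\<lambda>t. g \<otimes>\<^bsub>G\<^esub> s (x,y) t) {0..1}"
      and s3: "homotopic_with (\<lambda>h. \<forall>g\<in>carrier G. \<forall>x y. (x,y) \<in> U i \<longrightarrow> h (g \<otimes>\<^bsub>G\<^esub> x, g \<otimes>\<^bsub>G\<^esub> y) = (g \<otimes>\<^bsub>G\<^esub> fst (h (x,y)), g \<otimes>\<^bsub>G\<^esub> snd (h (x,y))))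
          (subtopology (prod_topology T T) (U i)) (prod_topology T T) ((\<lambda>\<gamma>. (\<gamma> 0, \<gamma> 1)) \<circ> s) id"
      using A_core(3)[OF tg conjunct1[OF VH[OF i]] conjunct2[OF VH[OF i]] omi U_def[THEN fun_cong[of _ _ i]]]
      by blast
    show "\<exists>s. continuous_map
                          (subtopology (prod_topology T T) (U i))
                          (path_space T) s \<and>
                         (\<forall>g\<in>carrier G.
                             \<forall>x\<in>U i.
                                s (case x of (x, y) \<Rightarrow> (g \<otimes>\<^bsub>G\<^esub> x, g \<otimes>\<^bsub>G\<^esub> y)) =
                                (\<lambda>t\<in>{0..1}. g \<otimes>\<^bsub>G\<^esub> s x t)) \<and>
                         homotopic_with
                          (\<lambda>h. \<forall>g\<in>carrier G.
                                  \<forall>x\<in>U i.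
                                     h (case x of (x, y) \<Rightarrow> (g \<otimes>\<^bsub>G\<^esub> x, g \<otimes>\<^bsub>G\<^esub> y)) =
                                     (case h x of (x, y) \<Rightarrow> (g \<otimes>\<^bsub>G\<^esub> x, g \<otimes>\<^bsub>G\<^esub> y)))
                          (subtopology (prod_topology T T) (U i))
                          (prod_topology T T) ((\<lambda>\<gamma>. (\<gamma> 0, \<gamma> 1)) \<circ> s) id"
    proof (rule exI[of _ s], intro conjI)
      show "continuous_map (subtopology (prod_topology T T) (U i)) (path_space T) s" by (rule s1)
      show "\<forall>g\<in>carrier G. \<forall>x\<in>U i.
                                s (case x of (x, y) \<Rightarrow> (g \<otimes>\<^bsub>G\<^esub> x, g \<otimes>\<^bsub>G\<^esub> y)) =
                                (\<lambda>t\<in>{0..1}. g \<otimes>\<^bsub>G\<^esub> s x t)"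
        using s2 by auto
      show "homotopic_with
                          (\<lambda>h. \<forall>g\<in>carrier G.
                                  \<forall>x\<in>U i.
                                     h (case x of (x, y) \<Rightarrow> (g \<otimes>\<^bsub>G\<^esub> x, g \<otimes>\<^bsub>G\<^esub> y)) =
                                     (case h x of (x, y) \<Rightarrow> (g \<otimes>\<^bsub>G\<^esub> x, g \<otimes>\<^bsub>G\<^esub> y)))
                          (subtopology (prod_topology T T) (U i))
                          (prod_topology T T) ((\<lambda>\<gamma>. (\<gamma> 0, \<gamma> 1)) \<circ> s) id"
        using s3 by (rule homotopic_with_mono) (auto simp: case_prod_beta)
    qed
  next
    show "\<Union> (U ` {..<k}) = topspace (prod_topology T T)"
    proof
      show "\<Union> (U ` {..<k}) \<subseteq> topspace (prod_topology T T)" by (auto simp: U_def)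
      show "topspace (prod_topology T T) \<subseteq> \<Union> (U ` {..<k})"
      proof
        fix z assume z: "z \<in> topspace (prod_topology T T)"
        then have "inv\<^bsub>G\<^esub> (fst z) \<otimes>\<^bsub>G\<^esub> snd z \<in> topspace T"
          using carr by (auto simp: mem_Times_iff)
        then obtain i where "i < k" "inv\<^bsub>G\<^esub> (fst z) \<otimes>\<^bsub>G\<^esub> snd z \<in> V i" using cov by blast
        then show "z \<in> \<Union> (U ` {..<k})" using z by (auto simp: U_def mem_Times_iff)
      qed
    qed
  qed
qed



theorem theorem5p11:
  fixes G :: "('a, 'b) monoid_scheme" and T :: "'a topology"
  assumes "topological_group G T"
    and "connected_space T"
    and "metrizable_space T"
    and "compact_space T"
    and "Hausdorff_space T"
  shows "TC_G G T (\<lambda>g x. g \<otimes>\<^bsub>G\<^esub> x) = LS_cat T"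
  unfolding TC_G_def secat_G_def LS_cat_def
  apply (rule arg_cong[where f=Inf])
  apply (rule Set.set_eqI, rule iffI)
   apply (erule CollectE, erule exE, erule conjE, erule exE)
   apply (rule CollectI, rule exI, rule conjI, assumption)
   apply (erule dirB[OF assms(1)])
  apply (erule CollectE, erule exE, erule conjE, erule exE)
  apply (rule CollectI, rule exI, rule conjI, assumption)
  apply (erule dirA[OF assms(1) assms(2)])
  done


end
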